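(* In the setting of the context, assume (G2') and (HJ'), and let $\tilde\rho$ be a metric on $X$ inducing its topology, with constants $\gamma\ge1$, $C\ge1$ such that $C^{-1}\tilde\rho(x,y)^{-\gamma}\le\tilde G(x,y)\le C\tilde\rho(x,y)^{-\gamma}$ for all $x,y$. Then there exist $\tilde\alpha\in(0,1)$ and $\tilde c_J\ge1$ such that for all $x\in X_0$, $0<r<\tilde\alpha\tilde R_0(x)$ and $y\in\tilde U(x,\tilde\alpha^2r)$, $$\tilde\mu_x^{\tilde U(x,\tilde\alpha r)}(E)\le\tilde c_J\,\tilde\mu_y^{\tilde U(x,r)}(E)\qquad\text{for every Borel }E\subseteq X\setminus\tilde U(x,r).$$
   Context: $(X,\rho)$ separable metric space, $X_0\subsetneq X$ open. For every open $U\subseteq X$ and $x\in X$ a finite Borel measure $\mu_x^U$ is given such that for all open $U,V$ and $x$: $\mu_x^U(U)=0$, $\mu_x^U(X)\le1$, $\mu_x^U=\varepsilon_x$ (Dirac) if $x\notin U$; $y\mapsto\mu_y^U(E)$ universally measurable for Borel $E$; $\mu_x^U=\int\mu_y^U\,d\mu_x^V(y)$ if $V\subseteq U$. $\tilde\mu_x^U:=\frac{w}{w(x)}\mu_x^U$ (measure with density $w/w(x)$ w.r.t. $\mu_x^U$). $G\colon X\times X\to(0,\infty]$ Borel; $V(x,s):=\{y:G(y,x)^{-1}<s\}$, $\overset\circ V(x,s)$ its interior, $S_0(x):=\sup\{s>0:\overline{V(x,s)}\subseteq X_0\}$ for $x\in X_0$. $\tilde U(x,r):=\{y:\tilde\rho(x,y)<r\}$,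 $\tilde R_0(x):=\sup\{r>0:\overline{\tilde U(x,r)}\subseteq X_0\}$. (G2'): for every $x$, $G(x,x)=\lim_{y\to x}G(y,x)=\infty$; there is a Borel $w$ with $0<w\le1$ and $\int w\,d\mu_x^U\le w(x)$ for all open $U$, $x$; there is $\tilde c>1$ with $\tilde G(x,z)\wedge\tilde G(y,z)\le\tilde c\tilde G(x,y)$ for all $x,y,z$, where $\tilde G(x,y):=G(x,y)/(w(x)w(y))$; $\lambda:=\inf w(X_0)>0$; for each $x$ and neighborhood $V$ of $x$, $G(\cdot,x)/w$ is bounded on $X\setminus V$. (HJ'): there exist $\alpha\in(0,1)$, $c_J\ge1$ such that for all $x\in X_0$, $0<s<S_0(x)$ and $y\in\overset\circ V(x,\alpha^2s)$, $\mu_x^{\overset\circ V(x,\alpha s)}(E)\le c_J\mu_y^{\overset\circ V(x,s)}(E)$ for every Borel $E\subseteq X\setminus\overset\circ V(x,s)$. *)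

theory Defs
  imports "HOL-Analysis.Analysis" "HOL-Probability.Probability"
begin

definition univ_measurable :: "('a::topological_space \<Rightarrow> ennreal) \<Rightarrow> bool" where
  "univ_measurable f \<longleftrightarrow>
     (\<forall>\<nu>::'a measure. sets \<nu> = sets borel \<longrightarrow> finite_measure \<nu> \<longrightarrow>
        f \<in> borel_measurable (completion \<nu>))"

definition wmeas :: "('a set \<Rightarrow> 'a \<Rightarrow> 'a measure) \<Rightarrow> ('a \<Rightarrow> real) \<Rightarrow> 'a set \<Rightarrow> 'a \<Rightarrow> 'a measure" where
  "wmeas \<mu> w U x = density (\<mu> U x) (\<lambda>y. ennreal (w y / w x))"

definition Gt :: "('a \<Rightarrow> 'a \<Rightarrow> ennreal) \<Rightarrow> ('a \<Rightarrow> real) \<Rightarrow> 'a \<Rightarrow> 'a \<Rightarrow> ennreal" where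
  "Gt G w x y = G x y / ennreal (w x * w y)"

definition Vset :: "('a \<Rightarrow> 'a \<Rightarrow> ennreal) \<Rightarrow> 'a \<Rightarrow> real \<Rightarrow> 'a set" where
  "Vset G x s = {y. inverse (G y x) < ennreal s}"

text \<open>S_0(x) = sup {s>0. closure V(x,s) \<subseteq> X_0} (as an extended real; sup of the
  empty set is -\<infinity>, so that no s with 0 < s < S_0(x) exists in that case).\<close>
definition S0 :: "('a::topological_space \<Rightarrow> 'a \<Rightarrow> ennreal) \<Rightarrow> 'a set \<Rightarrow> 'a \<Rightarrow> ereal" where
  "S0 G X0 x = Sup (ereal ` {s. 0 < s \<and> closure (Vset G x s) \<subseteq> X0})"

definition Ut :: "('a \<Rightarrow> 'a \<Rightarrow> real) \<Rightarrow> 'a \<Rightarrow> real \<Rightarrow> 'a set" where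
  "Ut \<rho>t x r = {y. \<rho>t x y < r}"

definition R0t :: "('a::topological_space \<Rightarrow> 'a \<Rightarrow> real) \<Rightarrow> 'a set \<Rightarrow> 'a \<Rightarrow> ereal" where
  "R0t \<rho>t X0 x = Sup (ereal ` {r. 0 < r \<and> closure (Ut \<rho>t x r) \<subseteq> X0})"

end

theory Submission
  imports Defs
begin

lemma measure_le_integral:
  fixes M N :: "'a::topological_space measure"
  assumes sM: "sets M = sets borel" and sN: "sets N = sets borel" and E: "E \<in> sets borel"
    and le: "\<And>F. F \<in> sets borel \<Longrightarrow> F \<subseteq> E \<Longrightarrow> emeasure M F \<le> c * emeasure N F"
    and g: "g \<in> borel_measurable borel"
  shows "(\<integral>\<^sup>+ z. g z * indicator E z \<partial>M) \<le> c * (\<integral>\<^sup>+ z. g z * indicator E z \<partial>N)"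
proof -
  define M' where "M' = density M (indicator E)"
  define N' where "N' = scale_measure c (density N (indicator E))"
  have sM': "sets M' = sets borel" and sN': "sets N' = sets borel" using sM sN by (auto simp: M'_def N'_def)
  have Em: "E \<in> sets M" "E \<in> sets N" using E sM sN by auto
  have gM: "g \<in> borel_measurable M" "g \<in> borel_measurable N"
    using g sM sN by (auto simp: measurable_def dest: sets_eq_imp_space_eq)
  have iM: "(indicator E :: _ \<Rightarrow> ennreal) \<in> borel_measurable M" "(indicator E :: _ \<Rightarrow> ennreal) \<in> borel_measurable N"
    using Em by auto
  have "emeasure M' F \<le> emeasure N' F" for F
  proof (cases "F \<in> sets borel")
    case True
    have "emeasure M' F = emeasure M (E \<inter> F)" unfolding M'_def
      using True sM Em by (intro emeasure_restricted) auto
    also have "\<dots> \<le> c * emeasure N (E \<inter> F)" using True E by (intro le) auto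
    also have "\<dots> = emeasure N' F" unfolding N'_def using True sN Em
      by (simp add: emeasure_restricted)
    finally show ?thesis .
  next
    case False
    then have "F \<notin> sets M'" using sM' by auto
    then show ?thesis by (simp add: emeasure_notin_sets)
  qed
  then have "M' \<le> N'" using sM' sN'
    by (auto simp: le_measure_iff le_fun_def dest: sets_eq_imp_space_eq)
  then have "nn_integral M' g \<le> nn_integral N' g" using sM' sN' by (intro nn_integral_mono_measure) auto
  also have "nn_integral M' g = (\<integral>\<^sup>+ z. indicator E z * g z \<partial>M)"
    unfolding M'_def using gM iM by (simp add: nn_integral_density)
  also have "nn_integral N' g = c * (\<integral>\<^sup>+ z. indicator E z * g z \<partial>N)"
    unfolding N'_def using gM iM by (simp add: nn_integral_scale_measure nn_integral_density)
  finally show ?thesis by (simp add: mult.commute)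
qed


lemma H1: assumes s: "0 < s" shows "(inverse (G::ennreal) < ennreal s) \<longleftrightarrow> ennreal (1/s) < G"
proof (cases G rule: ennreal_cases)
  case (real g)
  show ?thesis
  proof (cases "g = 0")
    case True then show ?thesis using real s by simp
  next
    case False
    then have g: "g > 0" using real by simp
    have "inverse G = ennreal (1/g)" using real g by (simp add: inverse_ennreal divide_inverse)
    then show ?thesis using real g s by (simp add: ennreal_less_iff field_simps)
  qed
next
  case top then show ?thesis using s by simp
qed

theorem lemma7p6:
  fixes \<mu> :: "'a::metric_space set \<Rightarrow> 'a \<Rightarrow> 'a measure"
    and X0 :: "'a set"
    and G :: "'a \<Rightarrow> 'a \<Rightarrow> ennreal"
    and w :: "'a \<Rightarrow> real"
    and \<rho>t :: "'a \<Rightarrow> 'a \<Rightarrow> real"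
    and ct \<gamma> C :: real
  assumes separable: "\<exists>D::'a set. countable D \<and> closure D = UNIV"
    and X0_open: "open X0" and X0_proper: "X0 \<noteq> UNIV"
    \<comment> \<open>standing assumptions on the family of measures\<close>
    and mu_sets: "\<And>U x. open U \<Longrightarrow> sets (\<mu> U x) = sets borel"
    and mu_finite: "\<And>U x. open U \<Longrightarrow> finite_measure (\<mu> U x)"
    and mu_U: "\<And>U x. open U \<Longrightarrow> emeasure (\<mu> U x) U = 0"
    and mu_le1: "\<And>U x. open U \<Longrightarrow> emeasure (\<mu> U x) UNIV \<le> 1"
    and mu_dirac: "\<And>U x. open U \<Longrightarrow> x \<notin> U \<Longrightarrow> \<mu> U x = return borel x"
    and mu_univ: "\<And>U E. open U \<Longrightarrow> E \<in> sets borel \<Longrightarrow>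
                     univ_measurable (\<lambda>y. emeasure (\<mu> U y) E)"
    and mu_balayage: "\<And>U V x E. open U \<Longrightarrow> open V \<Longrightarrow> V \<subseteq> U \<Longrightarrow> E \<in> sets borel \<Longrightarrow>
         emeasure (\<mu> U x) E = (\<integral>\<^sup>+ y. emeasure (\<mu> U y) E \<partial>completion (\<mu> V x))"
    \<comment> \<open>(G2')\<close>
    and G_meas: "(\<lambda>(x, y). G x y) \<in> borel_measurable borel"
    and G_pos: "\<And>x y. G x y > 0"
    and G_diag: "\<And>x. G x x = \<infinity>"
    and G_lim: "\<And>x. ((\<lambda>y. G y x) \<longlongrightarrow> \<infinity>) (at x)"
    and w_meas: "w \<in> borel_measurable borel"
    and w_pos: "\<And>x. 0 < w x" and w_le1: "\<And>x. w x \<le> 1"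
    and w_super: "\<And>U x. open U \<Longrightarrow> (\<integral>\<^sup>+ y. ennreal (w y) \<partial>\<mu> U x) \<le> ennreal (w x)"
    and ct_gt1: "ct > 1"
    and Gt_quasi: "\<And>x y z. min (Gt G w x z) (Gt G w y z) \<le> ennreal ct * Gt G w x y"
    and lambda_pos: "\<exists>lam>0. \<forall>x\<in>X0. lam \<le> w x"
    and G_bdd: "\<And>x N. open N \<Longrightarrow> x \<in> N \<Longrightarrow>
                   \<exists>B<\<infinity>. \<forall>y\<in>-N. G y x / ennreal (w y) \<le> B"
    \<comment> \<open>(HJ')\<close>
    and HJ: "\<exists>\<alpha> cJ. 0 < \<alpha> \<and> \<alpha> < 1 \<and> cJ \<ge> 1 \<and>
         (\<forall>x\<in>X0. \<forall>s. 0 < s \<and> ereal s < S0 G X0 x \<longrightarrow>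
            (\<forall>y\<in>interior (Vset G x (\<alpha>\<^sup>2 * s)). \<forall>E\<in>sets borel.
               E \<subseteq> - interior (Vset G x s) \<longrightarrow>
               emeasure (\<mu> (interior (Vset G x (\<alpha> * s))) x) E
                 \<le> ennreal cJ * emeasure (\<mu> (interior (Vset G x s)) y) E))"
    \<comment> \<open>the metric tilde rho\<close>
    and rho_eq0: "\<And>x y. \<rho>t x y = 0 \<longleftrightarrow> x = y"
    and rho_sym: "\<And>x y. \<rho>t x y = \<rho>t y x"
    and rho_tri: "\<And>x y z. \<rho>t x z \<le> \<rho>t x y + \<rho>t y z"
    and rho_top: "\<And>S. open S \<longleftrightarrow> (\<forall>x\<in>S. \<exists>r>0. Ut \<rho>t x r \<subseteq> S)"
    and gamma: "\<gamma> \<ge> 1" and C: "C \<ge> 1"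
    and G_comp: "\<And>x y. x \<noteq> y \<Longrightarrow>
         ennreal (\<rho>t x y powr (-\<gamma>) / C) \<le> Gt G w x y \<and>
         Gt G w x y \<le> ennreal (C * \<rho>t x y powr (-\<gamma>))"
  shows "\<exists>\<alpha>t cJt. 0 < \<alpha>t \<and> \<alpha>t < 1 \<and> cJt \<ge> 1 \<and>
         (\<forall>x\<in>X0. \<forall>r. 0 < r \<and> ereal r < ereal \<alpha>t * R0t \<rho>t X0 x \<longrightarrow>
            (\<forall>y\<in>Ut \<rho>t x (\<alpha>t\<^sup>2 * r). \<forall>E\<in>sets borel.
               E \<subseteq> - Ut \<rho>t x r \<longrightarrow>
               emeasure (wmeas \<mu> w (Ut \<rho>t x (\<alpha>t * r)) x) E
                 \<le> ennreal cJt * emeasure (wmeas \<mu> w (Ut \<rho>t x r) y) E))"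
  proof -
  obtain \<alpha> cJ where a0: "0 < \<alpha>" and a1: "\<alpha> < 1" and cJ1: "cJ \<ge> 1" and
    HJa: "\<forall>x\<in>X0. \<forall>s. 0 < s \<and> ereal s < S0 G X0 x \<longrightarrow>
            (\<forall>y\<in>interior (Vset G x (\<alpha>\<^sup>2 * s)). \<forall>E\<in>sets borel.
               E \<subseteq> - interior (Vset G x s) \<longrightarrow>
               emeasure (\<mu> (interior (Vset G x (\<alpha> * s))) x) E
                 \<le> ennreal cJ * emeasure (\<mu> (interior (Vset G x s)) y) E)"
    using HJ by (elim exE conjE) 
  have HJ': "emeasure (\<mu> (interior (Vset G x (\<alpha> * s))) x) E
                 \<le> ennreal cJ * emeasure (\<mu> (interior (Vset G x s)) y) E"
    if "x \<in> X0" "0 < s" "ereal s < S0 G X0 x"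
            "y \<in> interior (Vset G x (\<alpha>\<^sup>2 * s))" "E \<in> sets borel"
            "E \<subseteq> - interior (Vset G x s)" for x s y E
    using HJa that by blast
  obtain lam0 where lam0: "lam0 > 0" "\<And>x. x \<in> X0 \<Longrightarrow> lam0 \<le> w x" using lambda_pos by blast
  define lam where "lam = min lam0 1"
  have lam: "0 < lam" "lam \<le> 1" "\<And>x. x \<in> X0 \<Longrightarrow> lam \<le> w x" using lam0 by (auto simp: lam_def intro: min.coboundedI1)
  define b where "b = \<alpha> * lam\<^sup>2 / C\<^sup>2"
  have b0: "0 < b" using a0 lam C by (simp add: b_def)
  have b1: "b < 1"
  proof -
    have "lam\<^sup>2 / C\<^sup>2 \<le> 1" using lam C by (simp add: power_le_one)
    then have "b \<le> \<alpha>" using a0 unfolding b_def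
      by (metis mult.right_neutral mult_left_mono less_imp_le times_divide_eq_right)
    then show ?thesis using a1 by simp
  qed
  define aT where "aT = b powr (1/\<gamma>)"
  have at0: "0 < aT" using b0 by (simp add: aT_def)
  have at1: "aT < 1" using b0 b1 gamma by (simp add: aT_def powr01_less_one)
  have atg: "aT powr \<gamma> = b" using b0 gamma by (simp add: aT_def powr_powr)
  define cJt where "cJt = cJ / lam"
  have cJt1: "cJt \<ge> 1" using cJ1 lam by (simp add: cJt_def field_simps)
  have rho_nn: "\<And>x y. 0 \<le> \<rho>t x y"
  proof -
    fix x y
    have "\<rho>t x x \<le> \<rho>t x y + \<rho>t y x" by (rule rho_tri)
    then show "0 \<le> \<rho>t x y" using rho_eq0[of x x] rho_sym[of x y] by simp
  qed
  have Ut_open: "open (Ut \<rho>t x R)" for x R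
  proof -
    have "\<exists>e>0. Ut \<rho>t z e \<subseteq> Ut \<rho>t x R" if "z \<in> Ut \<rho>t x R" for z
    proof (intro exI conjI)
      show "0 < R - \<rho>t x z" using that by (simp add: Ut_def)
      show "Ut \<rho>t z (R - \<rho>t x z) \<subseteq> Ut \<rho>t x R"
      proof
        fix u assume "u \<in> Ut \<rho>t z (R - \<rho>t x z)"
        then have "\<rho>t z u < R - \<rho>t x z" by (simp add: Ut_def)
        moreover have "\<rho>t x u \<le> \<rho>t x z + \<rho>t z u" by (rule rho_tri)
        ultimately show "u \<in> Ut \<rho>t x R" by (simp add: Ut_def)
      qed
    qed
    then show ?thesis using rho_top by blast
  qed
  have Ut_mono: "Ut \<rho>t x R \<subseteq> Ut \<rho>t x R'" if "R \<le> R'" for x R R'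
    using that by (auto simp: Ut_def)
  have V_mono: "Vset G x t \<subseteq> Vset G x t'" if "t \<le> t'" for x t t'
  proof
    fix z assume "z \<in> Vset G x t"
    then have "inverse (G z x) < ennreal t" by (simp add: Vset_def)
    also have "\<dots> \<le> ennreal t'" using that by (rule ennreal_leI)
    finally show "z \<in> Vset G x t'" by (simp add: Vset_def)
  qed
  have Gdec: "G z x = Gt G w z x * ennreal (w z * w x)" for z x
    using w_pos[of z] w_pos[of x] unfolding Gt_def by (simp add: ennreal_divide_times)
  have incl_out: "Vset G x t \<subseteq> Ut \<rho>t x R"
    if R: "R > 0" and t: "t > 0" and le: "C * R powr (-\<gamma>) \<le> 1/t" for x R t
  proof
    fix z assume zV: "z \<in> Vset G x t"
    show "z \<in> Ut \<rho>t x R"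
    proof (rule ccontr)
      assume "z \<notin> Ut \<rho>t x R"
      then have dz: "\<rho>t x z \<ge> R" by (simp add: Ut_def)
      then have zx: "z \<noteq> x" using R rho_eq0 by force
      have d: "\<rho>t z x \<ge> R" using dz rho_sym by simp
      have "Gt G w z x \<le> ennreal (C * \<rho>t z x powr (-\<gamma>))" using G_comp[OF zx] by simp
      then have "Gt G w z x * ennreal (w z * w x) \<le> ennreal (C * \<rho>t z x powr (-\<gamma>)) * ennreal (w z * w x)"
        by (rule mult_right_mono) simp
      then have "G z x \<le> ennreal (C * \<rho>t z x powr (-\<gamma>)) * ennreal (w z * w x)"
        by (simp only: Gdec[of z x, symmetric])
      also have "\<dots> = ennreal (C * \<rho>t z x powr (-\<gamma>) * (w z * w x))"
        using C w_pos[of z] w_pos[of x] by (simp add: ennreal_mult)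
      also have "\<dots> \<le> ennreal (1/t)"
      proof (rule ennreal_leI)
        have p: "\<rho>t z x powr (-\<gamma>) \<le> R powr (-\<gamma>)"
          by (rule powr_mono2') (use d R gamma in auto)
        have ww: "w z * w x \<le> 1" using w_le1[of z] w_le1[of x] w_pos[of z] w_pos[of x]
          by (simp add: mult_le_one)
        have c1: "C * \<rho>t z x powr (-\<gamma>) \<le> C * R powr (-\<gamma>)"
          by (rule mult_left_mono[OF p]) (use C in simp)
        have "C * \<rho>t z x powr (-\<gamma>) * (w z * w x) \<le> C * R powr (-\<gamma>) * 1"
          by (rule mult_mono[OF c1 ww]) (use C w_pos[of z] w_pos[of x] in simp_all)
        then show "C * \<rho>t z x powr (-\<gamma>) * (w z * w x) \<le> 1/t" using le by simp
      qed
      finally have "\<not> ennreal (1/t) < G z x" by simp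
      then show False using zV H1[OF t] by (simp add: Vset_def)
    qed
  qed
  have incl_in: "Ut \<rho>t x R \<subseteq> Vset G x t"
    if x: "x \<in> X0" and R: "R > 0" and t: "t > 0" and UX: "Ut \<rho>t x R \<subseteq> X0"
      and le: "1/t \<le> lam\<^sup>2 / C * R powr (-\<gamma>)" for x R t
  proof
    fix z assume zU: "z \<in> Ut \<rho>t x R"
    show "z \<in> Vset G x t"
    proof (cases "z = x")
      case True then show ?thesis using t by (simp add: Vset_def G_diag)
    next
      case False
      then have zx: "z \<noteq> x" .
      have d: "\<rho>t z x < R" using zU rho_sym by (simp add: Ut_def)
      have dp: "\<rho>t z x > 0" using zx rho_eq0 rho_nn by (metis less_eq_real_def)
      have wz: "lam \<le> w z" using zU UX lam by blast
      have wx: "lam \<le> w x" using x lam by blast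
      have "1/t \<le> lam\<^sup>2 / C * R powr (-\<gamma>)" by (rule le)
      also have "\<dots> < \<rho>t z x powr (-\<gamma>) / C * (w z * w x)"
      proof -
        have p: "R powr (-\<gamma>) < \<rho>t z x powr (-\<gamma>)"
          by (rule powr_less_mono2_neg) (use d dp gamma in auto)
        have ww: "lam\<^sup>2 \<le> w z * w x" unfolding power2_eq_square
          by (rule mult_mono[OF wz wx]) (use lam w_pos[of z] in simp_all)
        have "lam\<^sup>2 * R powr (-\<gamma>) < (w z * w x) * \<rho>t z x powr (-\<gamma>)"
          by (rule mult_le_less_imp_less[OF ww p]) (use lam in simp_all)
        then have "lam\<^sup>2 * R powr (-\<gamma>) / C < (w z * w x) * \<rho>t z x powr (-\<gamma>) / C"
          by (rule divide_strict_right_mono) (use C in simp)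
        then show ?thesis by (simp add: mult.commute)
      qed
      finally have lt: "1/t < \<rho>t z x powr (-\<gamma>) / C * (w z * w x)" .
      have "ennreal (1/t) < ennreal (\<rho>t z x powr (-\<gamma>) / C * (w z * w x))"
        using lt t by (simp add: ennreal_less_iff)
      also have "\<dots> = ennreal (\<rho>t z x powr (-\<gamma>) / C) * ennreal (w z * w x)"
        by (rule ennreal_mult) (use C w_pos[of z] w_pos[of x] in auto)
      also have "\<dots> \<le> Gt G w z x * ennreal (w z * w x)"
        using G_comp[OF zx] by (intro mult_right_mono) auto
      also have "\<dots> = G z x" by (simp only: Gdec[of z x, symmetric])
      finally show ?thesis using H1[OF t] by (simp add: Vset_def)
    qed
  qed
  have mu_mono: "emeasure (\<mu> A z) F \<le> emeasure (\<mu> B z) F"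
    if A: "open A" and B: "open B" and AB: "A \<subseteq> B" and F: "F \<in> sets borel" and FB: "F \<subseteq> - B"
    for A B z F
  proof -
    have FA: "F \<in> sets (\<mu> A z)" using F mu_sets[OF A] by simp
    have FC: "F \<in> sets (completion (\<mu> A z))" using FA by (rule sets_completionI_sets)
    have "emeasure (\<mu> A z) F = emeasure (completion (\<mu> A z)) F"
      using FC FA by simp
    also have "\<dots> = (\<integral>\<^sup>+ u. indicator F u \<partial>completion (\<mu> A z))"
      using FC by simp
    also have "\<dots> \<le> (\<integral>\<^sup>+ u. emeasure (\<mu> B u) F \<partial>completion (\<mu> A z))"
    proof (rule nn_integral_mono)
      fix u
      show "indicator F u \<le> emeasure (\<mu> B u) F"
      proof (cases "u \<in> F")
        case True
        then have "u \<notin> B" using FB by auto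
        then have "\<mu> B u = return borel u" by (rule mu_dirac[OF B])
        then show ?thesis using True F by simp
      qed simp
    qed
    also have "\<dots> = emeasure (\<mu> B z) F" by (rule mu_balayage[OF B A AB F, symmetric])
    finally show ?thesis .
  qed
  show ?thesis
  proof (rule exI[of _ aT], rule exI[of _ cJt], intro conjI at0 at1 cJt1 ballI allI impI)
    fix x r y E
    assume x: "x \<in> X0" and rr: "0 < r \<and> ereal r < ereal aT * R0t \<rho>t X0 x"
      and y: "y \<in> Ut \<rho>t x (aT\<^sup>2 * r)" and E: "E \<in> sets borel" and EB: "E \<subseteq> - Ut \<rho>t x r"
    have r0: "0 < r" using rr by simp
    obtain r' where r': "r < r'" "0 < r'" "closure (Ut \<rho>t x r') \<subseteq> X0"
    proof -
      have "\<exists>r'. r < r' \<and> 0 < r' \<and> closure (Ut \<rho>t x r') \<subseteq> X0"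
      proof (rule ccontr)
        assume "\<not> ?thesis"
        then have "R0t \<rho>t X0 x \<le> ereal r" unfolding R0t_def
          by (intro Sup_least) (auto simp: not_less)
        then have "ereal aT * R0t \<rho>t X0 x \<le> ereal aT * ereal r"
          using at0 by (intro ereal_mult_left_mono) auto
        also have "\<dots> \<le> ereal r" using at1 r0 by simp
        finally show False using rr[THEN conjunct2] leD by blast
      qed
      then show ?thesis using that by blast
    qed
    have UX: "Ut \<rho>t x r \<subseteq> X0"
    proof -
      have "Ut \<rho>t x r \<subseteq> Ut \<rho>t x r'" using r'(1) by (intro Ut_mono) simp
      also have "\<dots> \<subseteq> closure (Ut \<rho>t x r')" by (rule closure_subset)
      also have "\<dots> \<subseteq> X0" by (rule r'(3))
      finally show ?thesis .
    qed
    define K where "K = r powr (-\<gamma>)"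
    have K0: "K > 0" using r0 by (simp add: K_def)
    define s where "s = 1 / (C * K)"
    have s0: "s > 0" using K0 C by (simp add: s_def)
    define s' where "s' = 1 / (C * r' powr (-\<gamma>))"
    have ss': "s < s'"
    proof -
      have "r' powr (-\<gamma>) < K" unfolding K_def using r' r0 gamma by (simp add: powr_less_mono2_neg)
      moreover have "0 < C * r' powr (-\<gamma>)" using C r' by simp
      ultimately have "C * r' powr (-\<gamma>) < C * K" using C by simp
      then show ?thesis unfolding s_def s'_def
        by (rule divide_strict_left_mono) (use C K0 \<open>0 < C * r' powr (-\<gamma>)\<close> in simp_all)
    qed
    have s'0: "s' > 0" using s0 ss' by simp
    have Vs_B: "Vset G x s \<subseteq> Ut \<rho>t x r"
      using C K0 by (intro incl_out r0 s0) (simp add: s_def K_def)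
    have Vs': "Vset G x s' \<subseteq> Ut \<rho>t x r'"
      using C r' by (intro incl_out s'0) (simp_all add: s'_def)
    have "closure (Vset G x s') \<subseteq> X0" using closure_mono[OF Vs'] r' by blast
    then have "ereal s' \<le> S0 G X0 x" unfolding S0_def using s'0 by (intro Sup_upper) auto
    then have sS0: "ereal s < S0 G X0 x" using ss' by (metis less_ereal.simps(1) less_le_trans)
    have powat: "(aT * r) powr (-\<gamma>) = K / b"
    proof -
      have "(aT * r) powr (-\<gamma>) = aT powr (-\<gamma>) * K"
        unfolding K_def using at0 r0 by (simp add: powr_mult)
      also have "aT powr (-\<gamma>) = inverse b" using atg by (simp add: powr_minus)
      finally show ?thesis by (simp add: divide_inverse mult.commute)
    qed
    have powat2: "(aT\<^sup>2 * r) powr (-\<gamma>) = K / b\<^sup>2"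
    proof -
      have "(aT\<^sup>2 * r) powr (-\<gamma>) = (aT * aT) powr (-\<gamma>) * K"
        unfolding K_def power2_eq_square using at0 r0 by (simp add: powr_mult)
      also have "(aT * aT) powr (-\<gamma>) = inverse (b * b)"
        using at0 atg by (simp add: powr_minus powr_mult)
      finally show ?thesis by (simp add: divide_inverse mult.commute power2_eq_square)
    qed
    have aTr: "aT * r \<le> r" using at1 r0 by simp
    have aT2r: "aT\<^sup>2 * r \<le> r"
    proof -
      have "aT\<^sup>2 \<le> 1" using at0 at1 by (simp add: power_le_one)
      then show ?thesis using r0 by (simp add: mult_le_cancel_right1)
    qed
    have as0: "\<alpha> * s > 0" using a0 s0 by simp
    have a2s0: "\<alpha>\<^sup>2 * s > 0" using a0 s0 by simp
    have A_V: "Ut \<rho>t x (aT * r) \<subseteq> Vset G x (\<alpha> * s)"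
    proof (rule incl_in[OF x _ as0])
      show "0 < aT * r" using at0 r0 by simp
      show "Ut \<rho>t x (aT * r) \<subseteq> X0" using Ut_mono[OF aTr] UX by blast
      have "1 / (\<alpha> * s) = C * K / \<alpha>" unfolding s_def using a0 C K0 by (simp add: field_simps)
      also have "\<dots> = lam\<^sup>2 / C * (K / b)" unfolding b_def using a0 C K0 lam by (simp add: field_simps power2_eq_square)
      finally show "1 / (\<alpha> * s) \<le> lam\<^sup>2 / C * (aT * r) powr (-\<gamma>)" using powat by simp
    qed
    have Y_V: "Ut \<rho>t x (aT\<^sup>2 * r) \<subseteq> Vset G x (\<alpha>\<^sup>2 * s)"
    proof (rule incl_in[OF x _ a2s0])
      show "0 < aT\<^sup>2 * r" using at0 r0 by simp
      show "Ut \<rho>t x (aT\<^sup>2 * r) \<subseteq> X0" using Ut_mono[OF aT2r] UX by blast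
      have q: "1 \<le> C\<^sup>2 / lam\<^sup>2" using C lam by (simp add: power_mono)
      have "1 / (\<alpha>\<^sup>2 * s) = C * K / \<alpha>\<^sup>2" unfolding s_def using a0 C K0 by (simp add: field_simps)
      also have "\<dots> \<le> (C * K / \<alpha>\<^sup>2) * (C\<^sup>2 / lam\<^sup>2)"
      proof -
        have "(C * K / \<alpha>\<^sup>2) * 1 \<le> (C * K / \<alpha>\<^sup>2) * (C\<^sup>2 / lam\<^sup>2)"
          by (rule mult_left_mono[OF q]) (use a0 C K0 in simp)
        then show ?thesis by (simp only: mult_1_right)
      qed
      also have "\<dots> = lam\<^sup>2 / C * (K / b\<^sup>2)" unfolding b_def using a0 C K0 lam
        by (simp add: field_simps power2_eq_square)
      finally show "1 / (\<alpha>\<^sup>2 * s) \<le> lam\<^sup>2 / C * (aT\<^sup>2 * r) powr (-\<gamma>)" using powat2 by simp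
    qed
    define A where "A = Ut \<rho>t x (aT * r)"
    define B where "B = Ut \<rho>t x r"
    define V1 where "V1 = interior (Vset G x (\<alpha> * s))"
    define V2 where "V2 = interior (Vset G x s)"
    have oA: "open A" and oB: "open B" and oV1: "open V1" and oV2: "open V2"
      by (simp_all add: A_def B_def V1_def V2_def Ut_open)
    have AV1: "A \<subseteq> V1" unfolding A_def V1_def by (rule interior_maximal[OF A_V Ut_open])
    have V12: "V1 \<subseteq> V2" unfolding V1_def V2_def
      using a0 a1 s0 by (intro interior_mono V_mono) simp
    have V2B: "V2 \<subseteq> B" unfolding V2_def B_def using interior_subset Vs_B by blast
    have yI: "y \<in> interior (Vset G x (\<alpha>\<^sup>2 * s))"
      using y interior_maximal[OF Y_V Ut_open] by blast
    have key: "emeasure (\<mu> A x) F \<le> ennreal cJ * emeasure (\<mu> B y) F"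
      if F: "F \<in> sets borel" and FE: "F \<subseteq> E" for F
    proof -
      have FB: "F \<subseteq> - B" using FE EB unfolding B_def by blast
      have "emeasure (\<mu> A x) F \<le> emeasure (\<mu> V1 x) F"
        by (rule mu_mono[OF oA oV1 AV1 F]) (use FB V12 V2B in blast)
      also have "\<dots> \<le> ennreal cJ * emeasure (\<mu> V2 y) F"
        unfolding V1_def V2_def
        by (rule HJ'[OF x s0 sS0 yI F]) (use FB V2B in \<open>auto simp: V2_def\<close>)
      also have "\<dots> \<le> ennreal cJ * emeasure (\<mu> B y) F"
        by (rule mult_left_mono[OF mu_mono[OF oV2 oB V2B F FB]]) simp
      finally show ?thesis .
    qed
    have fB: "(\<lambda>z. ennreal (w z / c)) \<in> borel_measurable borel" for c
      using w_meas by measurable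
    have fM: "(\<lambda>z. ennreal (w z / c)) \<in> borel_measurable (\<mu> U z')" if "open U" for c U z'
      unfolding measurable_cong_sets[OF mu_sets[of U z', OF that] refl, of borel] by (rule fB)
    have EM: "E \<in> sets (\<mu> U z')" if "open U" for U z'
      using E mu_sets[of U z', OF that] by simp
    have iM: "(indicator E :: _ \<Rightarrow> ennreal) \<in> borel_measurable (\<mu> U z')" if "open U" for U z'
      using EM[OF that] by simp
    have "emeasure (wmeas \<mu> w A x) E = (\<integral>\<^sup>+ z. ennreal (w z / w x) * indicator E z \<partial>\<mu> A x)"
      unfolding wmeas_def by (rule emeasure_density[OF fM[OF oA] EM[OF oA]])
    also have "\<dots> \<le> (\<integral>\<^sup>+ z. ennreal (1/lam) * (ennreal (w z / w y) * indicator E z) \<partial>\<mu> A x)"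
    proof (rule nn_integral_mono)
      fix z
      have "w z / w x \<le> w z / (lam * w y)"
      proof (rule divide_left_mono)
        have "lam * w y \<le> lam * 1" using lam w_le1[of y] by (intro mult_left_mono) auto
        also have "\<dots> \<le> w x" using lam x by simp
        finally show "lam * w y \<le> w x" .
        show "0 \<le> w z" using w_pos[of z] by simp
        show "0 < w x * (lam * w y)" using w_pos[of x] w_pos[of y] lam by simp
      qed
      also have "\<dots> = (1/lam) * (w z / w y)" by simp
      finally have "ennreal (w z / w x) \<le> ennreal ((1/lam) * (w z / w y))" by (rule ennreal_leI)
      also have "\<dots> = ennreal (1/lam) * ennreal (w z / w y)"
        by (rule ennreal_mult) (use lam w_pos[of z] w_pos[of y] in auto)
      finally have "ennreal (w z / w x) \<le> ennreal (1/lam) * ennreal (w z / w y)" .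
      then have "ennreal (w z / w x) * indicator E z \<le> ennreal (1/lam) * ennreal (w z / w y) * indicator E z"
        by (rule mult_right_mono) simp
      then show "ennreal (w z / w x) * indicator E z \<le> ennreal (1/lam) * (ennreal (w z / w y) * indicator E z)"
        by (simp add: mult.assoc)
    qed
    also have "\<dots> = ennreal (1/lam) * (\<integral>\<^sup>+ z. ennreal (w z / w y) * indicator E z \<partial>\<mu> A x)"
      by (rule nn_integral_cmult) (use fM[OF oA] iM[OF oA] in simp)
    also have "\<dots> \<le> ennreal (1/lam) * (ennreal cJ * (\<integral>\<^sup>+ z. ennreal (w z / w y) * indicator E z \<partial>\<mu> B y))"
      by (rule mult_left_mono[OF measure_le_integral[OF mu_sets[OF oA] mu_sets[OF oB] E key fB]]) simp_all
    also have "\<dots> = ennreal cJt * emeasure (wmeas \<mu> w B y) E"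
    proof -
      have eqB: "(\<integral>\<^sup>+ z. ennreal (w z / w y) * indicator E z \<partial>\<mu> B y) = emeasure (wmeas \<mu> w B y) E"
        unfolding wmeas_def by (rule emeasure_density[OF fM[OF oB] EM[OF oB], symmetric])
      have "ennreal (1/lam) * ennreal cJ = ennreal cJt"
        unfolding cJt_def using lam cJ1 by (simp add: ennreal_mult[symmetric])
      then show ?thesis unfolding eqB by (simp add: mult.assoc[symmetric])
    qed
    finally show "emeasure (wmeas \<mu> w (Ut \<rho>t x (aT * r)) x) E
                 \<le> ennreal cJt * emeasure (wmeas \<mu> w (Ut \<rho>t x r) y) E"
      by (simp add: A_def B_def)
  qed
qed
end
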